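(* Let $N=\{1,\ldots,n\}$ and $\mathcal{X}=\{-1,1\}^n$. A deterministic voting rule $\phi:\mathcal{X}\to\{-1,1\}$ is weakly robust and anonymous if and only if it is an anonymous simple majority rule, i.e. a rule satisfying $\phi(x)=1$ whenever $\sum_ix_i>0$ and $\phi(x)=-1$ whenever $\sum_ix_i<0$, whose values on ties $\sum_ix_i=0$ are such that $\phi$ is anonymous.
   Context: $\phi$ is anonymous if $\phi(x)=\phi((x_{\pi(i)})_{i\in N})$ for all $x$ and all permutations $\pi$ of $N$. Responsiveness: $r_i(\phi,p)=p(\{x:\phi(x)=x_i\})$ for $p\in\Delta(\mathcal{X})$ (probability distributions on $\mathcal{X}$). $\phi$ is weakly robust if for every $p\in\Delta(\mathcal{X})$ there is some $i\in N$ with $r_i(\phi,p)\geq1/2$. *)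

theory Defs
  imports Complex_Main
begin

text \<open>Voters are the elements of a finite type 'n (so N has n = CARD('n) elements).
  Profiles x \<in> X = {-1,1}^N are functions 'n \<Rightarrow> int with values in {-1,1}.\<close>

definition profiles :: "('n::finite \<Rightarrow> int) set" where
  "profiles = {x. \<forall>i. x i \<in> {-1, 1}}"

definition is_rule :: "(('n::finite \<Rightarrow> int) \<Rightarrow> int) \<Rightarrow> bool" where
  "is_rule \<phi> \<longleftrightarrow> (\<forall>x\<in>profiles. \<phi> x \<in> {-1, 1})"

definition anonymous :: "(('n::finite \<Rightarrow> int) \<Rightarrow> int) \<Rightarrow> bool" where
  "anonymous \<phi> \<longleftrightarrow>
     (\<forall>x\<in>profiles. \<forall>\<pi>. bij \<pi> \<longrightarrow> \<phi> x = \<phi> (\<lambda>i. x (\<pi> i)))"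

definition distributions :: "(('n::finite \<Rightarrow> int) \<Rightarrow> real) set" where
  "distributions = {p. (\<forall>x\<in>profiles. p x \<ge> 0) \<and> (\<Sum>x\<in>profiles. p x) = 1}"

definition responsiveness ::
  "(('n::finite \<Rightarrow> int) \<Rightarrow> int) \<Rightarrow> (('n \<Rightarrow> int) \<Rightarrow> real) \<Rightarrow> 'n \<Rightarrow> real" where
  "responsiveness \<phi> p i = (\<Sum>x\<in>{x\<in>profiles. \<phi> x = x i}. p x)"

definition weakly_robust :: "(('n::finite \<Rightarrow> int) \<Rightarrow> int) \<Rightarrow> bool" where
  "weakly_robust \<phi> \<longleftrightarrow>
     (\<forall>p\<in>distributions. \<exists>i. responsiveness \<phi> p i \<ge> 1/2)"

definition simple_majority :: "(('n::finite \<Rightarrow> int) \<Rightarrow> int) \<Rightarrow> bool" where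
  "simple_majority \<phi> \<longleftrightarrow>
     (\<forall>x\<in>profiles. ((\<Sum>i\<in>UNIV. x i) > 0 \<longrightarrow> \<phi> x = 1) \<and>
                   ((\<Sum>i\<in>UNIV. x i) < 0 \<longrightarrow> \<phi> x = -1))"

end

theory Submission
  imports Defs "HOL-Library.FuncSet" "HOL-Library.Cardinality"
begin

lemma finite_profiles: "finite (profiles :: ('n::finite \<Rightarrow> int) set)"
proof -
  have "profiles = (PiE UNIV (\<lambda>_::'n. {-1::int, 1}))"
    by (auto simp: profiles_def PiE_UNIV_domain Pi_def)
  then show ?thesis by (metis finite_PiE finite finite.emptyI finite_insert)
qed

lemma profile_sum:
  fixes x :: "'n::finite \<Rightarrow> int"
  assumes "x \<in> profiles"
  shows "(\<Sum>i\<in>UNIV. x i) = int (card {i. x i = 1}) - int (card {i. x i = -1})"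
    and "card {i. x i = 1} + card {i. x i = -1} = CARD('n)"
proof -
  have h: "\<And>i. x i = 1 \<or> x i = -1" using assms by (auto simp: profiles_def)
  have "(\<Sum>i\<in>UNIV. x i) = (\<Sum>i\<in>UNIV. if x i = 1 then 1 else -1)"
    using h by (intro sum.cong) auto
  also have "\<dots> = int (card {i. x i = 1}) - int (card {i. x i \<noteq> 1})"
    by (simp add: sum.If_cases Collect_neg_eq[symmetric])
  also have "{i. x i \<noteq> 1} = {i. x i = -1}" using h by force
  finally show "(\<Sum>i\<in>UNIV. x i) = int (card {i. x i = 1}) - int (card {i. x i = -1})" .
  have "{i. x i = 1} \<union> {i. x i = -1} = UNIV" using h by auto
  moreover have "{i. x i = 1} \<inter> {i. x i = -1} = {}" by auto
  ultimately show "card {i. x i = 1} + card {i. x i = -1} = CARD('n)"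
    by (metis card_Un_disjoint finite)
qed

lemma resp_sum:
  fixes \<phi> :: "('n::finite \<Rightarrow> int) \<Rightarrow> int"
  shows "(\<Sum>i\<in>UNIV. responsiveness \<phi> p i) = (\<Sum>x\<in>profiles. p x * real (card {i. \<phi> x = x i}))"
proof -
  have "(\<Sum>i\<in>UNIV. responsiveness \<phi> p i) = (\<Sum>i\<in>UNIV. \<Sum>x\<in>profiles. if \<phi> x = x i then p x else 0)"
    unfolding responsiveness_def by (simp add: sum.inter_filter finite_profiles)
  also have "\<dots> = (\<Sum>x\<in>profiles. \<Sum>i\<in>UNIV. if \<phi> x = x i then p x else 0)"
    by (rule sum.swap)
  also have "\<dots> = (\<Sum>x\<in>profiles. p x * real (card {i. \<phi> x = x i}))"
    by (intro sum.cong) (simp_all add: sum.If_cases)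
  finally show ?thesis .
qed

lemma maj_robust:
  fixes \<phi> :: "('n::finite \<Rightarrow> int) \<Rightarrow> int"
  assumes rule: "is_rule \<phi>" and maj: "simple_majority \<phi>"
  shows "weakly_robust \<phi>"
  unfolding weakly_robust_def
proof
  fix p :: "('n \<Rightarrow> int) \<Rightarrow> real" assume p: "p \<in> distributions"
  have card_ge: "real CARD('n) / 2 \<le> real (card {i. \<phi> x = x i})" if x: "x \<in> profiles" for x
  proof -
    note ps = profile_sum[OF x]
    define a where "a = card {i. x i = 1}"
    define b where "b = card {i. x i = -1}"
    have sab: "(\<Sum>i\<in>UNIV. x i) = int a - int b" "a + b = CARD('n)" using ps by (simp_all add: a_def b_def)
    have m1: "(\<Sum>i\<in>UNIV. x i) > 0 \<Longrightarrow> \<phi> x = 1" and m2: "(\<Sum>i\<in>UNIV. x i) < 0 \<Longrightarrow> \<phi> x = -1"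
      using maj x by (auto simp: simple_majority_def)
    have "\<phi> x \<in> {-1,1}" using rule x by (auto simp: is_rule_def)
    then consider "\<phi> x = 1" | "\<phi> x = -1" by auto
    then have "CARD('n) \<le> 2 * card {i. \<phi> x = x i}"
    proof cases
      case 1
      then have "{i. \<phi> x = x i} = {i. x i = 1}" by auto
      moreover have "\<not> a < b" using m2 sab 1 by auto
      ultimately show ?thesis using sab by (simp add: a_def)
    next
      case 2
      then have "{i. \<phi> x = x i} = {i. x i = -1}" by auto
      moreover have "\<not> b < a" using m1 sab 2 by auto
      ultimately show ?thesis using sab by (simp add: b_def)
    qed
    then have "real CARD('n) \<le> real (2 * card {i. \<phi> x = x i})" by (simp only: of_nat_le_iff)
    then show ?thesis by simp
  qed
  have "(\<Sum>x\<in>profiles. p x * (real CARD('n) / 2)) \<le> (\<Sum>x\<in>profiles. p x * real (card {i. \<phi> x = x i}))"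
    using p card_ge by (intro sum_mono mult_left_mono) (auto simp: distributions_def)
  also have "(\<Sum>x\<in>profiles. p x * (real CARD('n) / 2)) = real CARD('n) / 2"
    using p by (simp only: sum_distrib_right[symmetric] distributions_def mem_Collect_eq)
  finally have ge: "real CARD('n) / 2 \<le> (\<Sum>i\<in>UNIV. responsiveness \<phi> p i)"
    by (simp add: resp_sum)
  show "\<exists>i. 1/2 \<le> responsiveness \<phi> p i"
  proof (rule ccontr)
    assume "\<not> ?thesis"
    then have "\<And>i. responsiveness \<phi> p i < 1/2" by (meson not_le)
    then have "(\<Sum>i\<in>UNIV. responsiveness \<phi> p i) < (\<Sum>i\<in>(UNIV::'n set). 1/2)"
      by (intro sum_strict_mono) auto
    with ge show False by simp
  qed
qed


definition sw :: "'a \<Rightarrow> 'a \<Rightarrow> 'a \<Rightarrow> 'a" where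
  "sw i j l = (if l = i then j else if l = j then i else l)"

lemma sw_sw[simp]: "sw i j (sw i j l) = l"
  by (auto simp: sw_def)

lemma bij_sw: "bij (sw i j)"
  by (rule o_bij[of "sw i j"]) (auto simp: fun_eq_iff)

lemma card_filter_sum: "finite A \<Longrightarrow> card {y\<in>A. P y} = (\<Sum>y\<in>A. if P y then 1 else 0::nat)"
  by (simp add: sum.If_cases Int_def conj_commute)

lemma anon_not_robust:
  fixes \<phi> :: "('n::finite \<Rightarrow> int) \<Rightarrow> int" and x :: "'n \<Rightarrow> int"
  assumes anon: "anonymous \<phi>" and x: "x \<in> profiles"
    and small: "2 * card {i. x i = \<phi> x} < CARD('n)"
  shows "\<not> weakly_robust \<phi>"
proof
  assume wr: "weakly_robust \<phi>"
  define v where "v = \<phi> x"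
  define k where "k = card {i. x i = v}"
  define Orb where "Orb = {y. \<exists>\<pi>::'n\<Rightarrow>'n. bij \<pi> \<and> y = (\<lambda>i. x (\<pi> i))}"
  have Osub: "Orb \<subseteq> profiles" using x by (auto simp: Orb_def profiles_def)
  have finO: "finite Orb" using Osub finite_profiles finite_subset by blast
  have xO: "x \<in> Orb" unfolding Orb_def by (rule CollectI, rule exI[of _ id]) auto
  have cardO: "card Orb > 0" using finO xO card_gt_0_iff by blast
  have phiO: "\<phi> y = v" if "y \<in> Orb" for y
    using that anon x by (auto simp: Orb_def anonymous_def v_def)
  have cardk: "card {i. y i = v} = k" if yO: "y \<in> Orb" for y
  proof -
    obtain \<pi> :: "'n \<Rightarrow> 'n" where pi: "bij \<pi>" "y = (\<lambda>i. x (\<pi> i))" using yO by (auto simp: Orb_def)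
    have e: "{i. y i = v} = \<pi> -` {i. x i = v}" using pi by auto
    have "card (\<pi> -` {i. x i = v}) = card {i. x i = v}"
      using pi(1) by (intro card_vimage_inj) (auto simp: bij_is_inj bij_is_surj)
    then show ?thesis by (simp only: e k_def)
  qed
  have closed: "(\<lambda>l. y (sw i j l)) \<in> Orb" if yO: "y \<in> Orb" for y i j
  proof -
    obtain \<pi> :: "'n \<Rightarrow> 'n" where pi: "bij \<pi>" "y = (\<lambda>i. x (\<pi> i))" using yO by (auto simp: Orb_def)
    have "bij (\<pi> \<circ> sw i j)" by (rule bij_comp[OF bij_sw pi(1)])
    then show ?thesis unfolding Orb_def mem_Collect_eq using pi(2)
      by (intro exI[of _ "\<pi> \<circ> sw i j"] conjI) (simp_all add: o_def)
  qed
  define c where "c i = card {y\<in>Orb. y i = v}" for i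
  have cle: "c i \<le> c j" for i j
  proof -
    let ?f = "\<lambda>y l. y (sw i j l)"
    have "inj_on ?f {y\<in>Orb. y i = v}"
    proof (rule inj_onI)
      fix a b :: "'n \<Rightarrow> int" assume h: "?f a = ?f b"
      have "a l = b l" for l using fun_cong[OF h, of "sw i j l"] by simp
      then show "a = b" by (rule ext)
    qed
    moreover have "?f ` {y\<in>Orb. y i = v} \<subseteq> {y\<in>Orb. y j = v}"
      using closed by (auto simp: sw_def)
    ultimately show ?thesis unfolding c_def
      using finO by (intro card_inj_on_le) auto
  qed
  have ceq: "c i = c j" for i j using cle[of i j] cle[of j i] by simp
  have "(\<Sum>i\<in>UNIV. c i) = (\<Sum>i\<in>UNIV. \<Sum>y\<in>Orb. if y i = v then 1 else 0)"
    unfolding c_def using finO by (simp add: card_filter_sum)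
  also have "\<dots> = (\<Sum>y\<in>Orb. \<Sum>i\<in>UNIV. if y i = v then 1 else 0)" by (rule sum.swap)
  also have "\<dots> = (\<Sum>y\<in>Orb. k)"
    using cardk by (intro sum.cong) (simp_all flip: card_filter_sum)
  finally have sumc: "(\<Sum>i\<in>UNIV. c i) = card Orb * k" by simp
  define p where "p y = (if y \<in> Orb then 1 / real (card Orb) else 0)" for y
  have "(\<Sum>y\<in>profiles. p y) = (\<Sum>y\<in>profiles \<inter> Orb. 1 / real (card Orb))"
    unfolding p_def by (rule sum.inter_restrict[OF finite_profiles, symmetric])
  also have "profiles \<inter> Orb = Orb" using Osub by blast
  finally have "(\<Sum>y\<in>profiles. p y) = 1" using cardO by simp
  then have pd: "p \<in> distributions" by (auto simp: distributions_def p_def)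
  then obtain i where ri: "responsiveness \<phi> p i \<ge> 1/2" using wr by (auto simp: weakly_robust_def)
  have "responsiveness \<phi> p i = (\<Sum>y\<in>{y\<in>profiles. \<phi> y = y i} \<inter> Orb. 1 / real (card Orb))"
    unfolding responsiveness_def p_def
    by (rule sum.inter_restrict[symmetric]) (simp add: finite_profiles)
  also have "{y\<in>profiles. \<phi> y = y i} \<inter> Orb = {y\<in>Orb. y i = v}" using Osub phiO by auto
  finally have "responsiveness \<phi> p i = real (c i) / real (card Orb)" by (simp add: c_def)
  with ri cardO have "real (card Orb) \<le> 2 * real (c i)" by (simp add: field_simps)
  then have "card Orb \<le> 2 * c i" by linarith
  then have le: "CARD('n) * card Orb \<le> 2 * (CARD('n) * c i)" by simp
  have "(\<Sum>j\<in>UNIV. c j) = CARD('n) * c i"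
  proof -
    have "(\<Sum>j\<in>UNIV. c j) = (\<Sum>j\<in>(UNIV::'n set). c i)" using ceq[of _ i] by (intro sum.cong) auto
    then show ?thesis by simp
  qed
  then have eq: "CARD('n) * c i = k * card Orb" using sumc by (simp add: mult.commute)
  have "CARD('n) * card Orb \<le> 2 * (k * card Orb)" using le unfolding eq .
  then have "CARD('n) * card Orb \<le> (2 * k) * card Orb" by (simp only: mult.assoc)
  then have "CARD('n) \<le> 2 * k" using cardO by (simp only: mult_le_cancel2)
  with small show False by (simp add: k_def v_def)
qed

theorem corollary3:
  fixes \<phi> :: "('n::finite \<Rightarrow> int) \<Rightarrow> int"
  assumes "is_rule \<phi>"
  shows "(weakly_robust \<phi> \<and> anonymous \<phi>) \<longleftrightarrow> (simple_majority \<phi> \<and> anonymous \<phi>)"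
proof
  assume "simple_majority \<phi> \<and> anonymous \<phi>"
  then show "weakly_robust \<phi> \<and> anonymous \<phi>" using maj_robust[OF assms] by blast
next
  assume h: "weakly_robust \<phi> \<and> anonymous \<phi>"
  have "simple_majority \<phi>"
    unfolding simple_majority_def
  proof (intro ballI conjI impI)
    fix x :: "'n \<Rightarrow> int" assume x: "x \<in> profiles"
    note ps = profile_sum[OF x]
    have ph: "\<phi> x \<in> {-1,1}" using assms x by (auto simp: is_rule_def)
    { assume pos: "(\<Sum>i\<in>UNIV. x i) > 0"
      show "\<phi> x = 1"
      proof (rule ccontr)
        assume "\<phi> x \<noteq> 1"
        then have "\<phi> x = -1" using ph by auto
        then have "2 * card {i. x i = \<phi> x} < CARD('n)" using ps pos by auto
        then show False using anon_not_robust[OF _ x] h by blast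
      qed }
    { assume neg: "(\<Sum>i\<in>UNIV. x i) < 0"
      show "\<phi> x = -1"
      proof (rule ccontr)
        assume "\<phi> x \<noteq> -1"
        then have "\<phi> x = 1" using ph by auto
        then have "2 * card {i. x i = \<phi> x} < CARD('n)" using ps neg by auto
        then show False using anon_not_robust[OF _ x] h by blast
      qed }
  qed
  then show "simple_majority \<phi> \<and> anonymous \<phi>" using h by blast
qed

end
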